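(* Let $\tau\colon A\to A^*$ be a substitution prolongable on $a\in A$ and $\mathbf{x}=\tau^\omega(a)$. Assume $\tau_2$ is ultimately Pisot with characteristic polynomial $X^mP_\theta(X)$ for some Pisot number $\theta$ and some integer $m\ge0$. Then the characteristic polynomial of the incidence matrix of $\tau$ is $X^\ell P_\theta(X)$ for some $\ell\le m$. In particular, $\tau$ is ultimately Pisot with the same Pisot root $\theta$.
   Context: The incidence matrix of a substitution $\sigma$ over $\{a_1,\dots,a_d\}$ has $(i,j)$ entry $|\sigma(a_i)|_{a_j}$; characteristic polynomial of a substitution means that of its incidence matrix. A Pisot number is an algebraic integer $\theta>1$ whose other conjugates have modulus $<1$, with minimal polynomial $P_\theta$; a substitution is ultimately Pisot if its characteristic polynomial is $X^mP_\theta(X)$ for some $m\ge0$ and Pisot number $\theta$. The substitution $\tau_2$: let $A_2=\{1,\dots,p\}$, $p$ the number of length-$2$ factors of $\mathbf{x}$, and $\Theta_2$ the bijection numbering length-$2$ factors of $\mathbf{x}$ in order of first occurrence; for $\ell\in A_2$ with $u=\Theta_2^{-1}(\ell)$ and $m'=|\tau(u[0])|$, $\tau_2(\ell)=\Theta_2(w_0)\cdots\Theta_2(w_{m'-1})$ where $w_j$ is the length-$2$ factor of $\tau(u)$ starting at position $j$. *)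

theory Defs
  imports Complex_Main "Jordan_Normal_Form.Char_Poly"
begin

definition is_substitution :: "nat \<Rightarrow> (nat \<Rightarrow> nat list) \<Rightarrow> bool" where
  "is_substitution d \<tau> \<longleftrightarrow> (\<forall>b<d. \<tau> b \<noteq> [] \<and> set (\<tau> b) \<subseteq> {0..<d})"

definition subst_word :: "(nat \<Rightarrow> nat list) \<Rightarrow> nat list \<Rightarrow> nat list" where
  "subst_word \<tau> w = concat (map \<tau> w)"

definition prolongable :: "nat \<Rightarrow> (nat \<Rightarrow> nat list) \<Rightarrow> nat \<Rightarrow> bool" where
  "prolongable d \<tau> a \<longleftrightarrow> a < d \<and> (\<exists>u. u \<noteq> [] \<and> \<tau> a = a # u)"

text \<open>The infinite fixed point tau^omega(a), as a function nat => letter: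
  the n-th letter is read off the first iterate tau^k(a) that is long enough.\<close>
definition fixpoint_word :: "(nat \<Rightarrow> nat list) \<Rightarrow> nat \<Rightarrow> nat \<Rightarrow> nat" where
  "fixpoint_word \<tau> a n =
     (let k = (LEAST k. n < length ((subst_word \<tau> ^^ k) [a])) in ((subst_word \<tau> ^^ k) [a]) ! n)"

definition incidence_matrix :: "nat \<Rightarrow> (nat \<Rightarrow> nat list) \<Rightarrow> int mat" where
  "incidence_matrix d \<tau> = mat d d (\<lambda>(i,j). int (count_list (\<tau> i) j))"

definition factors2 :: "(nat \<Rightarrow> nat) \<Rightarrow> nat list set" where
  "factors2 x = {[x i, x (Suc i)] | i. True}"

definition first_occ :: "(nat \<Rightarrow> nat) \<Rightarrow> nat list \<Rightarrow> nat" where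
  "first_occ x w = (LEAST i. [x i, x (Suc i)] = w)"

text \<open>Theta_2: numbering of length-2 factors in order of first occurrence
  (numbered 0, ..., p-1 instead of 1, ..., p).\<close>
definition Theta2 :: "(nat \<Rightarrow> nat) \<Rightarrow> nat list \<Rightarrow> nat" where
  "Theta2 x w = card {v \<in> factors2 x. first_occ x v < first_occ x w}"

definition tau2 :: "(nat \<Rightarrow> nat list) \<Rightarrow> nat \<Rightarrow> nat \<Rightarrow> nat list" where
  "tau2 \<tau> a l =
     (let x = fixpoint_word \<tau> a;
          u = (THE u. u \<in> factors2 x \<and> Theta2 x u = l);
          m' = length (\<tau> (u ! 0))
      in map (\<lambda>j. Theta2 x (take 2 (drop j (subst_word \<tau> u)))) [0..<m'])"

text \<open>P is the minimal polynomial of the Pisot number theta: P is monic,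
  irreducible in Z[X] (equivalently in Q[X], by Gauss' lemma, as P is monic),
  has theta as a root; theta > 1 and every other complex root of P has modulus < 1.\<close>
definition pisot_minpoly :: "real \<Rightarrow> int poly \<Rightarrow> bool" where
  "pisot_minpoly \<theta> P \<longleftrightarrow>
     \<theta> > 1 \<and> lead_coeff P = 1 \<and> irreducible P \<and>
     poly (of_int_poly P) (complex_of_real \<theta>) = 0 \<and>
     (\<forall>z. poly (of_int_poly P) z = 0 \<and> z \<noteq> complex_of_real \<theta> \<longrightarrow> cmod z < 1)"

end

theory Submission
  imports Defs "Jordan_Normal_Form.Schur_Decomposition"
begin


lemma char_poly_left_inv:
  fixes A :: "'a :: comm_ring_1 mat"
  assumes A: "A \<in> carrier_mat n n" and P: "P \<in> carrier_mat n n" and Q: "Q \<in> carrier_mat n n"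
    and PQ: "P * Q = 1\<^sub>m n"
  shows "char_poly (P * A * Q) = char_poly A"
proof -
  define B where "B = A"
  have B: "B \<in> carrier_mat n n" using A B_def by simp
  let ?m = "\<lambda> a. [: -a :]"
  let ?P = "map_mat (\<lambda> a. [: a :]) P"
  let ?Q = "map_mat (\<lambda> a. [: a :]) Q"
  let ?B = "map_mat ?m B"
  let ?I = "map_mat (\<lambda> a. [: a :]) (1\<^sub>m n)"
  let ?XI = "[:0, 1:] \<cdot>\<^sub>m 1\<^sub>m n"
  have dim: "dim_row (P * B * Q) = n" "dim_row B = n" using P B by auto
  have cong: "\<And> x y z. x = y \<Longrightarrow> x * z = y * z" by auto
  have id: "?m = (\<lambda> a :: 'a. [: a :] * [: -1 :])" by (intro ext, auto)
  have "char_poly (P * B * Q) = det (?XI + map_mat (\<lambda>a. [:- a:]) (P * B * Q))" unfolding 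
    char_poly_defs dim by simp
  also have "?XI = ?P * ?XI * ?Q" (is "_ = ?left")
  proof -
    have "?P * ?XI = [:0, 1:] \<cdot>\<^sub>m (?P * 1\<^sub>m n)" 
      by (rule mult_smult_distrib[of _ n n _ n], insert P, auto)
    also have "?P * 1\<^sub>m n = ?P" using P by simp
    also have "([: 0, 1:] \<cdot>\<^sub>m ?P) * ?Q = [: 0, 1:] \<cdot>\<^sub>m (?P * ?Q)"
      by (rule mult_smult_assoc_mat, insert P Q, auto)
    also have "?P * ?Q = ?I" unfolding PQ[symmetric]
      by (rule map_poly_mult[symmetric, OF P Q])
    also have "[: 0, 1:] \<cdot>\<^sub>m ?I = ?XI"
      by rule auto
    finally show ?thesis ..
  qed
  also have "map_mat ?m (P * B * Q) = ?P * ?B * ?Q" (is "_ = ?right")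
    unfolding id
    by (subst map_poly_mult[OF mult_carrier_mat[OF P B] Q],
      subst map_poly_mult(3)[OF P B], simp)
  also have "?left + ?right = (?P * ?XI + ?P * ?B) * ?Q"
    by (rule add_mult_distrib_mat[symmetric, of _ n n], insert B P Q, auto)
  also have "?P * ?XI + ?P * ?B = ?P * (?XI + ?B)"
    by (rule mult_add_distrib_mat[symmetric, of _ n n], insert B P Q, auto)
  also have "det (?P * (?XI + ?B) * ?Q) = det ?P * det (?XI + ?B) * det ?Q"
    by (rule trans[OF det_mult[of _ n] cong[OF det_mult]], insert P Q B, auto)
  also have "\<dots> = (det ?P * det ?Q) * det (?XI + ?B)" by (simp add: ac_simps)
  also have "det (?XI + ?B) = char_poly B" unfolding char_poly_defs dim by simp
  also have "det ?P * det ?Q = det (?P * ?Q)"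
    by (rule det_mult[symmetric], insert P Q, auto)
  also have "?P * ?Q = ?I" unfolding PQ[symmetric]
    by (rule map_poly_mult[symmetric, OF P Q])
  also have "det \<dots> = prod_list (diag_mat ?I)"
    by (rule det_upper_triangular[of _ n], auto)
  also have "\<dots> = 1" unfolding prod_list_diag_prod
    by (rule prod.neutral) simp
  finally show ?thesis by (simp add: B_def)
qed

lemma char_poly_block_lower_zero:
  fixes T :: "'a :: idom mat"
  assumes T: "T \<in> carrier_mat (k + m) (k + m)"
    and z: "\<And>i j. k \<le> i \<Longrightarrow> i < k + m \<Longrightarrow> j < k \<Longrightarrow> T $$ (i, j) = 0"
  shows "char_poly T = char_poly (mat k k (\<lambda>(i,j). T $$ (i,j))) * char_poly (mat m m (\<lambda>(i,j). T $$ (i+k, j+k)))"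
proof -
  define A1 where "A1 = mat k k (\<lambda>(i,j). T $$ (i,j))"
  define A2 where "A2 = mat k m (\<lambda>(i,j). T $$ (i,j+k))"
  define A4 where "A4 = mat m m (\<lambda>(i,j). T $$ (i+k,j+k))"
  have A1: "A1 \<in> carrier_mat k k" and A2: "A2 \<in> carrier_mat k m" and A4: "A4 \<in> carrier_mat m m"
    by (auto simp: A1_def A2_def A4_def)
  have TT: "T = four_block_mat A1 A2 (0\<^sub>m m k) A4"
    by (rule eq_matI, insert T z, auto simp: A1_def A2_def A4_def four_block_mat_def)
  let ?cm = "\<lambda> A. [:0, 1:] \<cdot>\<^sub>m 1\<^sub>m (dim_row A) + map_mat (\<lambda>a. [:- a:]) A"
  let ?B2 = "map_mat (\<lambda>a. [:- a:]) A2"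
  have "char_poly T = det (?cm T)" unfolding char_poly_defs by simp
  also have "?cm T = four_block_mat (?cm A1) ?B2 (0\<^sub>m m k) (?cm A4)"
    unfolding TT by (rule eq_matI, insert A1 A2 A4, auto simp: one_poly_def)
  also have "det \<dots> = det (?cm A1) * det (?cm A4)"
    by (rule det_four_block_mat_lower_left_zero[OF _ _ refl], insert A1 A2 A4, auto)
  also have "\<dots> = char_poly A1 * char_poly A4" unfolding char_poly_defs ..
  finally show ?thesis unfolding A1_def A4_def .
qed



lemma char_poly_quotient_dvd:
  fixes A B :: "'a :: idom mat" and f r :: "nat \<Rightarrow> nat"
  assumes A: "A \<in> carrier_mat n n" and B: "B \<in> carrier_mat k k"
    and f: "\<And>i. i < n \<Longrightarrow> f i < k"
    and r: "\<And>b. b < k \<Longrightarrow> r b < n \<and> f (r b) = b"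
    and rel: "\<And>i b. i < n \<Longrightarrow> b < k \<Longrightarrow> (\<Sum>v\<in>{v. v < n \<and> f v = b}. A $$ (i, v)) = B $$ (f i, b)"
  shows "char_poly B dvd char_poly A"
proof -
  define R where "R = r ` {0..<k}"
  have injr: "inj_on r {0..<k}" using r by (metis atLeastLessThan_iff inj_onI)
  have cR: "card R = k" unfolding R_def using card_image[OF injr] by simp
  have Rsub: "R \<subseteq> {0..<n}" unfolding R_def using r by auto
  have kn: "k \<le> n" using card_mono[OF _ Rsub] cR by simp
  have cNR: "card ({0..<n} - R) = card {k..<n}"
    using card_Diff_subset[OF finite_subset[OF Rsub] Rsub] cR by simp
  obtain h where h: "bij_betw h {k..<n} ({0..<n} - R)"
    using finite_same_card_bij[OF _ _ cNR[symmetric]] by auto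
  define \<sigma> where "\<sigma> j = (if j < k then r j else h j)" for j
  have \<sigma>n: "\<sigma> j < n" if "j < n" for j
    using that r h unfolding \<sigma>_def bij_betw_def by auto
  have \<sigma>inj: "\<sigma> j = \<sigma> j' \<longleftrightarrow> j = j'" if "j < n" "j' < n" for j j'
  proof
    assume e: "\<sigma> j = \<sigma> j'"
    show "j = j'"
    proof (cases "j < k"; cases "j' < k")
      assume "j < k" "j' < k" thus ?thesis using e injr unfolding \<sigma>_def by (auto dest: inj_onD)
    next
      assume "j < k" "\<not> j' < k" 
      hence "h j' \<in> {0..<n} - R" using h that unfolding bij_betw_def by auto
      thus ?thesis using e \<open>j < k\<close> \<open>\<not> j' < k\<close> unfolding \<sigma>_def R_def by (metis atLeastLessThan_iff DiffD2 imageI zero_le)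
    next
      assume "\<not> j < k" "j' < k" 
      hence "h j \<in> {0..<n} - R" using h that unfolding bij_betw_def by auto
      thus ?thesis using e \<open>j' < k\<close> \<open>\<not> j < k\<close> unfolding \<sigma>_def R_def by (metis atLeastLessThan_iff DiffD2 imageI zero_le)
    next
      assume "\<not> j < k" "\<not> j' < k" thus ?thesis using e h that unfolding \<sigma>_def bij_betw_def
        by (auto dest: inj_onD)
    qed
  qed simp
  have \<sigma>nr: "\<sigma> j \<noteq> r b" if "k \<le> j" "j < n" "b < k" for j b
  proof -
    have "h j \<in> {0..<n} - R" using h that unfolding bij_betw_def by auto
    thus ?thesis using that unfolding \<sigma>_def R_def by auto
  qed
  define Q :: "'a mat" where "Q = mat n n (\<lambda>(i,j). if j < k then (if f i = j then 1 else 0) else (if i = \<sigma> j then 1 else 0))"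
  define Qi :: "'a mat" where "Qi = mat n n (\<lambda>(j,i). (if i = \<sigma> j then 1 else 0) - (if k \<le> j \<and> i = r (f (\<sigma> j)) then 1 else 0))"
  have Q: "Q \<in> carrier_mat n n" and Qi: "Qi \<in> carrier_mat n n" unfolding Q_def Qi_def by auto
  have Qiel: "(\<Sum>i<n. Qi $$ (j, i) * g i) = g (\<sigma> j) - (if k \<le> j then g (r (f (\<sigma> j))) else 0)"
    if j: "j < n" for j and g :: "nat \<Rightarrow> 'a"
  proof -
    have "(\<Sum>i<n. Qi $$ (j, i) * g i) = (\<Sum>i<n. (if i = \<sigma> j then g i else 0) - (if k \<le> j \<and> i = r (f (\<sigma> j)) then g i else 0))"
      by (rule sum.cong, insert j, auto simp: Qi_def algebra_simps)
    also have "\<dots> = (\<Sum>i<n. (if i = \<sigma> j then g i else 0)) - (\<Sum>i<n. (if k \<le> j \<and> i = r (f (\<sigma> j)) then g i else 0))"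
      by (rule sum_subtractf)
    also have "\<dots> = g (\<sigma> j) - (if k \<le> j then g (r (f (\<sigma> j))) else 0)"
      using \<sigma>n[OF j] r[OF f[OF \<sigma>n[OF j]]] by (auto simp: sum.delta)
    finally show ?thesis .
  qed
  have QiQ: "Qi * Q = 1\<^sub>m n"
  proof (rule eq_matI)
    fix j j' assume j: "j < dim_row (1\<^sub>m n :: 'a mat)" and j': "j' < dim_col (1\<^sub>m n :: 'a mat)"
    hence j: "j < n" and j': "j' < n" by auto
    have "(Qi * Q) $$ (j, j') = (\<Sum>i<n. Qi $$ (j, i) * Q $$ (i, j'))"
      using Q Qi j j' by (auto simp: scalar_prod_def atLeast0LessThan)
    also have "\<dots> = Q $$ (\<sigma> j, j') - (if k \<le> j then Q $$ (r (f (\<sigma> j)), j') else 0)"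
      by (rule Qiel[OF j])
    also have "\<dots> = (1\<^sub>m n :: 'a mat) $$ (j, j')"
    proof -
      have s: "\<sigma> j < n" using \<sigma>n j by auto
      have fs: "f (\<sigma> j) < k" using f s by auto
      have rs: "r (f (\<sigma> j)) < n" "f (r (f (\<sigma> j))) = f (\<sigma> j)" using r[OF fs] by auto
      show ?thesis
      proof (cases "j < k")
        case True
        hence "\<sigma> j = r j" unfolding \<sigma>_def by auto
        have "r j \<noteq> \<sigma> j'" if "k \<le> j'" using \<sigma>nr[OF that j' True] by auto
        then show ?thesis using True j j' s r[OF True] \<open>\<sigma> j = r j\<close>
          by (auto simp: Q_def)
      next
        case False
        have "r (f (\<sigma> j)) \<noteq> \<sigma> j'" if "k \<le> j'" using \<sigma>nr[OF that j' fs] by auto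
        then show ?thesis using False j j' s rs \<sigma>inj[OF j j'] by (auto simp: Q_def)
      qed
    qed
    finally show "(Qi * Q) $$ (j, j') = (1\<^sub>m n :: 'a mat) $$ (j, j')" .
  qed (insert Q Qi, auto)
  define T where "T = Qi * A * Q"
  have T: "T \<in> carrier_mat n n" unfolding T_def using A Q Qi by auto
  have AQ: "(A * Q) $$ (i, b) = B $$ (f i, b)" if "i < n" "b < k" for i b
  proof -
    have "(A * Q) $$ (i, b) = (\<Sum>v<n. A $$ (i, v) * Q $$ (v, b))"
      using A Q that kn by (auto simp: scalar_prod_def atLeast0LessThan)
    also have "\<dots> = (\<Sum>v<n. if f v = b then A $$ (i, v) else 0)"
      by (rule sum.cong, insert that kn, auto simp: Q_def)
    also have "\<dots> = (\<Sum>v\<in>{v \<in> {..<n}. f v = b}. A $$ (i, v))"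
      by (rule sum.inter_filter[symmetric], simp)
    also have "{v \<in> {..<n}. f v = b} = {v. v < n \<and> f v = b}" by auto
    finally show ?thesis using rel[OF that] by simp
  qed
  have Tel: "T $$ (j, b) = (if j < k then B $$ (j, b) else 0)" if j: "j < n" and b: "b < k" for j b
  proof -
    have "T $$ (j, b) = (Qi * (A * Q)) $$ (j, b)" unfolding T_def
      using assoc_mult_mat[OF Qi A Q] by simp
    also have "\<dots> = (\<Sum>i<n. Qi $$ (j, i) * (A * Q) $$ (i, b))"
      using A Q Qi j b kn by (auto simp: scalar_prod_def atLeast0LessThan)
    also have "\<dots> = (A * Q) $$ (\<sigma> j, b) - (if k \<le> j then (A * Q) $$ (r (f (\<sigma> j)), b) else 0)"
      by (rule Qiel[OF j])
    also have "\<dots> = (if j < k then B $$ (j, b) else 0)"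
    proof -
      have s: "\<sigma> j < n" using \<sigma>n j by auto
      have fs: "f (\<sigma> j) < k" using f s by auto
      have rs: "r (f (\<sigma> j)) < n" "f (r (f (\<sigma> j))) = f (\<sigma> j)" using r[OF fs] by auto
      show ?thesis
      proof (cases "j < k")
        case True
        then show ?thesis using AQ[OF s b] r[OF True] by (simp add: \<sigma>_def)
      next
        case False
        then show ?thesis using AQ[OF s b] AQ[OF rs(1) b] rs by simp
      qed
    qed
    finally show ?thesis .
  qed
  have nk: "n = k + (n - k)" using kn by simp
  have T': "T \<in> carrier_mat (k + (n - k)) (k + (n - k))" using T nk by simp
  have "char_poly A = char_poly T" unfolding T_def
    by (rule char_poly_left_inv[OF A Qi Q QiQ, symmetric])
  also have "\<dots> = char_poly (mat k k (\<lambda>(i,j). T $$ (i,j))) * char_poly (mat (n-k) (n-k) (\<lambda>(i,j). T $$ (i+k, j+k)))"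
    by (rule char_poly_block_lower_zero[OF T'], insert Tel kn, auto)
  also have "mat k k (\<lambda>(i,j). T $$ (i,j)) = B"
    by (rule eq_matI, insert B Tel kn, auto)
  finally show ?thesis by simp
qed



lemma X_prime: "prime ([:0,1:] :: int poly)"
proof -
  have "prime_elem ([:0,1:] :: int poly)" by (metis coprime_1_right prime_elem_linear_poly zero_neq_one)
  moreover have "normalize ([:0,1:] :: int poly) = [:0,1:]" by (metis normalize_monic lead_coeff_pCons(1) one_neq_zero lead_coeff_1 pCons_0_0 pCons_one)
  ultimately show ?thesis by (simp add: prime_def)
qed

lemma dvd_X_pow:
  fixes h :: "int poly"
  assumes "h dvd monom 1 m" "lead_coeff h = 1"
  shows "\<exists>i\<le>m. h = monom 1 i"
proof -
  have "h dvd [:0,1:]^m" using assms(1) by (metis x_as_monom x_pow_n)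
  then obtain i where "i \<le> m" "normalize h = normalize ([:0,1:]^i)" using divides_primepow_weak[OF X_prime] by metis
  moreover have "normalize ([:0,1:]^i :: int poly) = [:0,1:]^i" by (metis normalize_monic lead_coeff_power lead_coeff_pCons(1) one_neq_zero lead_coeff_1 pCons_0_0 pCons_one power_one)
  moreover have "normalize h = h" using assms(2) by (metis normalize_monic)
  ultimately show ?thesis by (metis x_as_monom x_pow_n)
qed

lemma poly_part:
  fixes c P :: "int poly"
  assumes dvd: "c dvd monom 1 m * P" and lc: "lead_coeff c = 1" "lead_coeff P = 1"
    and irr: "irreducible P" and nx: "\<And>i. c \<noteq> monom 1 i"
  shows "\<exists>l\<le>m. c = monom 1 l * P"
proof (cases "P dvd c")
  case True
  then obtain h where h: "c = P * h" by (auto elim: dvdE)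
  have P0: "P \<noteq> 0" using lc by auto
  have "h dvd monom 1 m" using dvd P0 unfolding h by (simp add: mult.commute)
  moreover have "lead_coeff h = 1" using lc h by (simp add: lead_coeff_mult)
  ultimately obtain i where "i \<le> m" "h = monom 1 i" using dvd_X_pow by blast
  then show ?thesis using h by (auto simp: mult.commute)
next
  case False
  have "coprime P c" using prime_elem_imp_coprime[OF irreducible_imp_prime_elem[OF irr] False] .
  hence "c dvd monom 1 m" using dvd by (metis coprime_commute coprime_dvd_mult_left_iff)
  then show ?thesis using dvd_X_pow lc nx by blast
qed



lemma trace_comm:
  fixes X Y :: "'a :: comm_ring_1 mat"
  assumes X: "X \<in> carrier_mat n m" and Y: "Y \<in> carrier_mat m n"
  shows "(\<Sum>i<n. (X * Y) $$ (i,i)) = (\<Sum>j<m. (Y * X) $$ (j,j))"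
proof -
  have "(\<Sum>i<n. (X * Y) $$ (i,i)) = (\<Sum>i<n. \<Sum>j<m. X $$ (i,j) * Y $$ (j,i))"
    using X Y by (auto simp: scalar_prod_def atLeast0LessThan intro!: sum.cong)
  also have "\<dots> = (\<Sum>j<m. \<Sum>i<n. Y $$ (j,i) * X $$ (i,j))"
    by (subst sum.swap, simp add: mult.commute)
  also have "\<dots> = (\<Sum>j<m. (Y * X) $$ (j,j))"
    using X Y by (auto simp: scalar_prod_def atLeast0LessThan intro!: sum.cong)
  finally show ?thesis .
qed

lemma char_poly_monom_trace:
  fixes A :: "complex mat"
  assumes A: "A \<in> carrier_mat n n" and c: "char_poly A = monom 1 n"
  shows "(\<Sum>i<n. A $$ (i,i)) = 0"
proof -
  define es where "es = replicate n (0::complex)"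
  have c': "char_poly A = (\<Prod>e\<leftarrow>es. [:- e, 1:])" unfolding c es_def
    by (simp add: prod_list_replicate x_pow_n[symmetric] x_as_monom[symmetric] monom_altdef)
  obtain B P Q where s: "schur_decomposition A es = (B,P,Q)" by (cases "schur_decomposition A es") auto
  from schur_decomposition[OF A c' s] have w: "similar_mat_wit A B P Q" and d: "diag_mat B = es" by auto
  from w A have B: "B \<in> carrier_mat n n" and P: "P \<in> carrier_mat n n" and Q: "Q \<in> carrier_mat n n"
    and QP: "Q * P = 1\<^sub>m n" and AB: "A = P * B * Q"
    unfolding similar_mat_wit_def Let_def by auto
  have "(\<Sum>i<n. A $$ (i,i)) = (\<Sum>i<n. ((P * B) * Q) $$ (i,i))" using AB by simp
  also have "\<dots> = (\<Sum>i<n. (Q * (P * B)) $$ (i,i))" by (rule trace_comm, insert P B Q, auto)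
  also have "Q * (P * B) = B" using assoc_mult_mat[OF Q P B] QP B by simp
  also have "(\<Sum>i<n. B $$ (i,i)) = 0"
  proof (rule sum.neutral, intro ballI)
    fix i assume "i \<in> {..<n}"
    hence "diag_mat B ! i = B $$ (i,i)" using B by (auto simp: diag_mat_def)
    thus "B $$ (i,i) = 0" using d \<open>i \<in> {..<n}\<close> by (simp add: es_def)
  qed
  finally show ?thesis .
qed

lemma char_poly_not_monom:
  fixes M :: "int mat"
  assumes M: "M \<in> carrier_mat n n" and nn: "\<And>i. i < n \<Longrightarrow> M $$ (i,i) \<ge> 0"
    and a: "a < n" "M $$ (a,a) > 0"
  shows "char_poly M \<noteq> monom 1 i"
proof
  assume c: "char_poly M = monom 1 i"
  have "degree (char_poly M) = n" using degree_monic_char_poly[OF M] by simp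
  hence i: "i = n" using c by (simp add: degree_monom_eq)
  define Mc where "Mc = map_mat (of_int :: int \<Rightarrow> complex) M"
  have Mc: "Mc \<in> carrier_mat n n" using M Mc_def by simp
  have "char_poly Mc = map_poly of_int (char_poly M)"
    unfolding Mc_def by (rule of_int_hom.char_poly_hom[OF M])
  also have "\<dots> = monom 1 n" using c i by (simp add: map_poly_monom)
  finally have "(\<Sum>i<n. Mc $$ (i,i)) = 0" by (rule char_poly_monom_trace[OF Mc])
  hence "of_int (\<Sum>i<n. M $$ (i,i)) = (0::complex)" using M unfolding Mc_def by simp
  hence s0: "(\<Sum>i<n. M $$ (i,i)) = 0" by (simp only: of_int_eq_0_iff)
  have "M $$ (a,a) \<le> (\<Sum>i<n. M $$ (i,i))"
    by (rule member_le_sum, insert nn a, auto)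
  with s0 a show False by simp
qed



lemma sw_append[simp]: "subst_word \<tau> (u @ v) = subst_word \<tau> u @ subst_word \<tau> v"
  by (simp add: subst_word_def)
lemma sw_Cons[simp]: "subst_word \<tau> (b # v) = \<tau> b @ subst_word \<tau> v"
  by (simp add: subst_word_def)
lemma sw_Nil[simp]: "subst_word \<tau> [] = []"
  by (simp add: subst_word_def)

lemma take2drop: "Suc j < length w \<Longrightarrow> take 2 (drop j w) = [w ! j, w ! Suc j]"
proof -
  assume l: "Suc j < length w"
  have "drop j w = w ! j # drop (Suc j) w" using l by (simp add: Cons_nth_drop_Suc)
  also have "drop (Suc j) w = w ! Suc j # drop (Suc (Suc j)) w" using l by (simp add: Cons_nth_drop_Suc)
  finally show ?thesis by (simp add: numeral_2_eq_2)
qed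

lemma sum_count_list: "finite S \<Longrightarrow> (\<Sum>v\<in>S. count_list ys v) = length (filter (\<lambda>y. y \<in> S) ys)"
proof (induction ys)
  case Nil then show ?case by simp
next
  case (Cons y ys)
  have "(\<Sum>v\<in>S. count_list (y # ys) v) = (\<Sum>v\<in>S. count_list ys v + (if y = v then 1 else 0))"
    by (rule sum.cong, auto)
  also have "\<dots> = (\<Sum>v\<in>S. count_list ys v) + (\<Sum>v\<in>S. if y = v then 1 else 0)"
    by (rule sum.distrib)
  also have "(\<Sum>v\<in>S. if y = v then 1 else 0) = (if y \<in> S then 1 else (0::nat))"
    using Cons.prems by (simp add: sum.delta)
  finally show ?case using Cons by simp
qed

lemma count_list_map: "count_list (map h js) b = length (filter (\<lambda>j. h j = b) js)"
  by (induction js) auto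

lemma count_list_nth: "count_list xs b = length (filter (\<lambda>j. xs ! j = b) [0..<length xs])"
  using count_list_map[of "\<lambda>j. xs ! j" "[0..<length xs]" b] by (simp add: map_nth)

lemma rank_bij:
  fixes g :: "'a \<Rightarrow> nat"
  assumes fin: "finite S" and inj: "inj_on g S"
  shows "bij_betw (\<lambda>w. card {v\<in>S. g v < g w}) S {0..<card S}"
proof -
  let ?rk = "\<lambda>w. card {v\<in>S. g v < g w}"
  have lt: "?rk v < ?rk w" if "v \<in> S" "w \<in> S" "g v < g w" for v w
    by (rule psubset_card_mono, insert fin that, auto)
  have injr: "inj_on ?rk S"
  proof (rule inj_onI)
    fix v w assume vw: "v \<in> S" "w \<in> S" "?rk v = ?rk w"
    have "\<not> g v < g w" using lt[of v w] vw by auto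
    moreover have "\<not> g w < g v" using lt[of w v] vw by auto
    ultimately have "g v = g w" by simp
    then show "v = w" using inj vw by (auto dest: inj_onD)
  qed
  have sub: "?rk ` S \<subseteq> {0..<card S}"
  proof
    fix y assume "y \<in> ?rk ` S"
    then obtain w where w: "w \<in> S" "y = ?rk w" by auto
    have "?rk w < card S" by (rule psubset_card_mono, insert fin w, auto)
    then show "y \<in> {0..<card S}" using w by auto
  qed
  have "card (?rk ` S) = card {0..<card S}" using card_image[OF injr] by simp
  hence "?rk ` S = {0..<card S}" using card_subset_eq[OF _ sub] by simp
  then show ?thesis using injr by (simp add: bij_betw_def)
qed


locale fp =
  fixes d :: nat and \<tau> :: "nat \<Rightarrow> nat list" and a :: nat
  assumes sub: "is_substitution d \<tau>" and pro: "prolongable d \<tau> a"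
begin

definition W where "W k = (subst_word \<tau> ^^ k) [a]"
abbreviation "x \<equiv> fixpoint_word \<tau> a"

lemma tau_ne: "b < d \<Longrightarrow> \<tau> b \<noteq> []" and tau_set: "b < d \<Longrightarrow> set (\<tau> b) \<subseteq> {0..<d}"
  using sub unfolding is_substitution_def by auto

lemma a_lt: "a < d" using pro unfolding prolongable_def by auto
lemma tau_a: obtains u where "u \<noteq> []" "\<tau> a = a # u" using pro unfolding prolongable_def by auto

lemma sw_set: "set w \<subseteq> {0..<d} \<Longrightarrow> set (subst_word \<tau> w) \<subseteq> {0..<d}"
  by (induction w) (use tau_set in auto)

lemma sw_len: "set w \<subseteq> {0..<d} \<Longrightarrow> length w \<le> length (subst_word \<tau> w)"
proof (induction w)
  case (Cons b w)
  then have "\<tau> b \<noteq> []" using tau_ne by auto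
  then show ?case using Cons by (cases "\<tau> b") auto
qed simp

lemma W_0: "W 0 = [a]" by (simp add: W_def)
lemma W_Suc: "W (Suc k) = subst_word \<tau> (W k)" by (simp add: W_def)

lemma W_set: "set (W k) \<subseteq> {0..<d}"
  by (induction k) (use a_lt sw_set in \<open>auto simp: W_0 W_Suc\<close>)

lemma W_hd: "\<exists>v. W k = a # v"
proof (induction k)
  case 0 then show ?case by (simp add: W_0)
next
  case (Suc k)
  then obtain v where "W k = a # v" by auto
  moreover obtain u where "\<tau> a = a # u" using tau_a by metis
  ultimately show ?case by (simp add: W_Suc)
qed

lemma W_prefix: "\<exists>s. W (Suc k) = W k @ s"
proof (induction k)
  case 0
  obtain u where "\<tau> a = a # u" using tau_a by metis
  then show ?case by (simp add: W_Suc W_0)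
next
  case (Suc k)
  then obtain s where "W (Suc k) = W k @ s" by auto
  then show ?case by (simp add: W_Suc[of "Suc k"] W_Suc[of k])
qed

lemma W_prefix_le: "k \<le> k' \<Longrightarrow> \<exists>s. W k' = W k @ s"
proof (induction k' rule: dec_induct)
  case base then show ?case by simp
next
  case (step k')
  then obtain s where "W k' = W k @ s" by auto
  moreover obtain s' where "W (Suc k') = W k' @ s'" using W_prefix by auto
  ultimately show ?case by auto
qed

lemma W_len: "Suc k \<le> length (W k)"
proof (induction k)
  case 0 then show ?case by (simp add: W_0)
next
  case (Suc k)
  obtain v where v: "W k = a # v" using W_hd by auto
  obtain u where u: "u \<noteq> []" "\<tau> a = a # u" using tau_a by metis
  have "set v \<subseteq> {0..<d}" using W_set[of k] v by auto
  then have "length v \<le> length (subst_word \<tau> v)" by (rule sw_len)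
  moreover have "length u \<ge> 1" using u by (cases u) auto
  ultimately have "length (W (Suc k)) \<ge> length (W k) + 1" using u v by (simp add: W_Suc)
  then show ?case using Suc by simp
qed

lemma x_eq: "n < length (W k) \<Longrightarrow> x n = W k ! n"
proof -
  assume n: "n < length (W k)"
  let ?k0 = "LEAST k. n < length ((subst_word \<tau> ^^ k) [a])"
  have ex: "n < length ((subst_word \<tau> ^^ k) [a])" using n by (simp add: W_def)
  have k0: "n < length (W ?k0)" using LeastI[of "\<lambda>k. n < length ((subst_word \<tau> ^^ k) [a])", OF ex]
    by (simp add: W_def)
  have le: "?k0 \<le> k" by (rule Least_le, rule ex)
  obtain s where "W k = W ?k0 @ s" using W_prefix_le[OF le] by auto
  then have "W k ! n = W ?k0 ! n" using k0 by (simp add: nth_append)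
  then show ?thesis unfolding fixpoint_word_def Let_def W_def[symmetric] by simp
qed

lemma x_lt: "x n < d"
proof -
  have "n < length (W n)" using W_len[of n] by simp
  then have "x n \<in> set (W n)" using x_eq by auto
  then show ?thesis using W_set[of n] by force
qed

lemma sw_prefix:
  assumes j: "j < length (subst_word \<tau> (map x [0..<n]))"
  shows "subst_word \<tau> (map x [0..<n]) ! j = x j"
proof -
  have nl: "n < length (W n)" using W_len[of n] by simp
  have tk: "map x [0..<n] = take n (W n)"
    by (rule nth_equalityI, insert nl, auto simp: x_eq)
  have "W n = take n (W n) @ drop n (W n)" by simp
  then have "W (Suc n) = subst_word \<tau> (map x [0..<n]) @ subst_word \<tau> (drop n (W n))"
    unfolding W_Suc tk by (metis sw_append)
  then have e: "W (Suc n) ! j = subst_word \<tau> (map x [0..<n]) ! j" using j by (simp add: nth_append)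
  have "j < length (W (Suc n))" using j \<open>W (Suc n) = _\<close> by simp
  then show ?thesis using e x_eq by simp
qed

definition s where "s i = length (subst_word \<tau> (map x [0..<i]))"

lemma factor_img:
  assumes j: "j < length (\<tau> (x i))"
  shows "take 2 (drop j (subst_word \<tau> [x i, x (Suc i)])) = [x (s i + j), x (Suc (s i + j))]"
    and "x (s i + j) = \<tau> (x i) ! j"
proof -
  define w where "w = subst_word \<tau> [x i, x (Suc i)]"
  have w: "w = \<tau> (x i) @ \<tau> (x (Suc i))" by (simp add: w_def)
  have V: "subst_word \<tau> (map x [0..<Suc (Suc i)]) = subst_word \<tau> (map x [0..<i]) @ w"
    by (simp add: w_def)
  have ne: "\<tau> (x (Suc i)) \<noteq> []" using tau_ne x_lt by auto
  have lw: "Suc j < length w" using j ne w by (cases "\<tau> (x (Suc i))") auto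
  have wt: "w ! t = x (s i + t)" if "t < length w" for t
  proof -
    have "subst_word \<tau> (map x [0..<Suc (Suc i)]) ! (s i + t) = w ! t"
      unfolding V s_def by (simp add: nth_append)
    moreover have "s i + t < length (subst_word \<tau> (map x [0..<Suc (Suc i)]))"
      unfolding V s_def using that by simp
    ultimately show ?thesis using sw_prefix by metis
  qed
  show "take 2 (drop j (subst_word \<tau> [x i, x (Suc i)])) = [x (s i + j), x (Suc (s i + j))]"
    unfolding w_def[symmetric] take2drop[OF lw] using wt[of j] wt[of "Suc j"] lw by simp
  show "x (s i + j) = \<tau> (x i) ! j" using wt[of j] lw j w by (simp add: nth_append)
qed

abbreviation "F \<equiv> factors2 x"

lemma F_fin: "finite F"
proof -
  have "F \<subseteq> (\<lambda>(b,c). [b,c]) ` ({0..<d} \<times> {0..<d})"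
    unfolding factors2_def using x_lt by auto
  then show ?thesis by (rule finite_subset) auto
qed

lemma first_occ_F: "w \<in> F \<Longrightarrow> [x (first_occ x w), x (Suc (first_occ x w))] = w"
proof -
  assume "w \<in> F"
  then have "\<exists>i. [x i, x (Suc i)] = w" unfolding factors2_def by auto
  then show ?thesis unfolding first_occ_def by (rule LeastI_ex)
qed

lemma Theta2_bij: "bij_betw (Theta2 x) F {0..<card F}"
proof -
  have "inj_on (first_occ x) F" by (rule inj_onI, metis first_occ_F)
  from rank_bij[OF F_fin this] show ?thesis unfolding Theta2_def[abs_def] .
qed

definition U where "U l = (THE u. u \<in> F \<and> Theta2 x u = l)"

lemma U_in: "l < card F \<Longrightarrow> U l \<in> F \<and> Theta2 x (U l) = l"
proof -
  assume l: "l < card F"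
  then have "l \<in> Theta2 x ` F" using Theta2_bij unfolding bij_betw_def by auto
  then obtain u where u: "u \<in> F" "Theta2 x u = l" by auto
  have "U l = u" unfolding U_def
    by (rule the_equality, insert u Theta2_bij, auto simp: bij_betw_def dest: inj_onD)
  then show ?thesis using u by simp
qed

lemma U_Theta: "w \<in> F \<Longrightarrow> U (Theta2 x w) = w"
  unfolding U_def
  by (rule the_equality, insert Theta2_bij, auto simp: bij_betw_def dest: inj_onD)

lemma Theta_lt: "w \<in> F \<Longrightarrow> Theta2 x w < card F"
  using Theta2_bij unfolding bij_betw_def by auto

lemma tau2_eq: "tau2 \<tau> a l = map (\<lambda>j. Theta2 x (take 2 (drop j (subst_word \<tau> (U l))))) [0..<length (\<tau> (U l ! 0))]"
  unfolding tau2_def Let_def U_def by simp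

end



theorem proposition38:
  fixes d :: nat and \<tau> :: "nat \<Rightarrow> nat list" and a :: nat
    and \<theta> :: real and P :: "int poly" and m :: nat
  assumes "is_substitution d \<tau>"
    and "prolongable d \<tau> a"
    and "\<forall>b<d. \<exists>i. fixpoint_word \<tau> a i = b"
    and "pisot_minpoly \<theta> P"
    and "char_poly (incidence_matrix (card (factors2 (fixpoint_word \<tau> a))) (tau2 \<tau> a))
           = monom 1 m * P"
  shows "\<exists>l\<le>m. char_poly (incidence_matrix d \<tau>) = monom 1 l * P"
proof -
  interpret fp d \<tau> a using assms(1,2) by unfold_locales
  define p where "p = card F"
  define M2 where "M2 = incidence_matrix p (tau2 \<tau> a)"
  define M where "M = incidence_matrix d \<tau>"
  define f where "f l = U l ! 0" for l
  obtain ib where ib: "\<forall>b<d. x (ib b) = b" using assms(3) by metis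
  define r where "r b = Theta2 x [x (ib b), x (Suc (ib b))]" for b
  have M2c: "M2 \<in> carrier_mat p p" by (simp add: M2_def incidence_matrix_def)
  have Mc: "M \<in> carrier_mat d d" by (simp add: M_def incidence_matrix_def)
  have Ui: "\<exists>i. U l = [x i, x (Suc i)]" if "l < p" for l
    using U_in[of l] that unfolding p_def factors2_def by auto
  have f: "f l < d" if "l < p" for l
    using Ui[OF that] x_lt unfolding f_def by auto
  have r: "r b < p \<and> f (r b) = b" if "b < d" for b
  proof -
    have w: "[x (ib b), x (Suc (ib b))] \<in> F" unfolding factors2_def by auto
    show ?thesis using Theta_lt[OF w] U_Theta[OF w] ib that unfolding r_def f_def p_def by auto
  qed
  have rel: "(\<Sum>v\<in>{v. v < p \<and> f v = b}. M2 $$ (l, v)) = M $$ (f l, b)" if l: "l < p" and b: "b < d" for l b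
  proof -
    obtain i where Ul: "U l = [x i, x (Suc i)]" using Ui[OF l] by auto
    define S where "S = {v. v < p \<and> f v = b}"
    define g where "g j = Theta2 x [x (s i + j), x (Suc (s i + j))]" for j
    have t2: "tau2 \<tau> a l = map g [0..<length (\<tau> (x i))]"
      unfolding tau2_eq Ul nth_Cons_0
    proof (rule map_cong[OF refl])
      fix j assume "j \<in> set [0..<length (\<tau> (x i))]"
      then have j: "j < length (\<tau> (x i))" by simp
      show "Theta2 x (take 2 (drop j (subst_word \<tau> [x i, x (Suc i)]))) = g j"
        unfolding g_def by (simp only: factor_img(1)[OF j])
    qed
    have gS: "(g j \<in> S) = (\<tau> (x i) ! j = b)" if j: "j < length (\<tau> (x i))" for j
    proof -
      have w: "[x (s i + j), x (Suc (s i + j))] \<in> F" unfolding factors2_def by auto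
      have "g j < p" using Theta_lt[OF w] unfolding g_def p_def .
      moreover have "f (g j) = \<tau> (x i) ! j" using U_Theta[OF w] factor_img(2)[OF j]
        unfolding f_def g_def by simp
      ultimately show ?thesis unfolding S_def by auto
    qed
    have "(\<Sum>v\<in>S. M2 $$ (l, v)) = (\<Sum>v\<in>S. int (count_list (tau2 \<tau> a l) v))"
      by (rule sum.cong, insert l, auto simp: S_def M2_def incidence_matrix_def)
    also have "\<dots> = int (\<Sum>v\<in>S. count_list (tau2 \<tau> a l) v)" by simp
    also have "(\<Sum>v\<in>S. count_list (tau2 \<tau> a l) v) = length (filter (\<lambda>y. y \<in> S) (tau2 \<tau> a l))"
      by (rule sum_count_list, simp add: S_def)
    also have "\<dots> = length (filter (\<lambda>j. \<tau> (x i) ! j = b) [0..<length (\<tau> (x i))])"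
      unfolding t2 filter_map by (simp add: o_def, rule arg_cong[of _ _ length], rule filter_cong, auto simp: gS)
    also have "\<dots> = count_list (\<tau> (x i)) b" by (rule count_list_nth[symmetric])
    also have "int \<dots> = M $$ (f l, b)" using x_lt[of i] b Ul unfolding M_def f_def incidence_matrix_def by simp
    finally show ?thesis unfolding S_def .
  qed
  have "char_poly M dvd char_poly M2" by (rule char_poly_quotient_dvd[OF M2c Mc f r rel])
  then have dvd: "char_poly M dvd monom 1 m * P" using assms(5) unfolding M2_def p_def by simp
  have lc: "lead_coeff (char_poly M) = 1" using degree_monic_char_poly[OF Mc] by simp
  have P: "lead_coeff P = 1" "irreducible P" using assms(4) unfolding pisot_minpoly_def by auto
  obtain u where u: "\<tau> a = a # u" using tau_a by metis
  have nx: "char_poly M \<noteq> monom 1 i" for i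
  proof (rule char_poly_not_monom[OF Mc _ a_lt])
    show "M $$ (a, a) > 0" using a_lt u unfolding M_def incidence_matrix_def by simp
  qed (simp add: M_def incidence_matrix_def)
  show ?thesis using poly_part[OF dvd lc P(1) P(2) nx] unfolding M_def by blast
qed


end
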